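(* For any valid scheme (satisfying (C1)–(C8)), any database $n$, any message indices $k\ne k'$, and any $\mathcal{R}_U$, letting $\mathcal{R}_U'$ be the user-side common randomness provided by the user privacy constraint (C6) for $(k,k',n,\mathcal{R}_U)$, \[ H\big(A_n^{[k',\mathcal{R}_U']}\mid Q_n^{[k',\mathcal{R}_U']},\mathcal{R}_U'\big)= H\big(A_n^{[k',\mathcal{R}_U']}\mid Q_n^{[k',\mathcal{R}_U']},W_k,\mathcal{R}_U'\big). \]
   Context: Model (SPIR with user-side common randomness). There are $N\ge1$ non-colluding databases, each storing the same $K\ge2$ messages $W_1,\dots,W_K$. Each message consists of $L$ i.i.d. symbols uniform over a sufficiently large finite field $\mathbb{F}_q$; entropies are in $q$-ary units, so $H(W_k)=L$ and $H(W_{1:K})=KL$. The databases share server-side common randomness $\mathcal{R}_S$, unknown to the user. The user holds user-side common randomness $\mathcal{R}_U$, a subset of the components of $\mathcal{R}_S$, unknown to the databases except for its size (uniform over subsets of given cardinality). $\mathcal{F}$ is the user's retrieval-strategy randomness. To retrieve $W_k$ the user sends $Q_n^{[k,\mathcal{R}_U]}$ to database $n$, receiving $A_n^{[k,\mathcal{R}_U]}$; $W_{\bar k}=\{W_j:j\ne k\}$. A valid scheme satisfies for all $k,n,\mathcal{R}_U$: (C1) $I(W_{1:K};k,\mathcal{F},\mathcal{R}_S,\mathcal{R}_U)=0$; (C2) $I(Q_{1:N}^{[k,\mathcal{R}_U]};W_{1:K},\mathcal{R}_S\setminus\mathcal{R}_U)=0$; (C3) $H(Q_{1:N}^{[k,\mathcal{R}_U]}\mid\mathcal{F})=0$;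 (C4) $H(A_n^{[k,\mathcal{R}_U]}\mid Q_n^{[k,\mathcal{R}_U]},W_{1:K},\mathcal{R}_S)=0$; (C5) $H(W_k\mid\mathcal{F},A_{1:N}^{[k,\mathcal{R}_U]},\mathcal{R}_U)=0$; (C6) user privacy: for all $k,k',n,\mathcal{R}_U$ there is $\mathcal{R}_U'$ with $H(\mathcal{R}_U')=H(\mathcal{R}_U)$ and $(Q_n^{[k,\mathcal{R}_U]},A_n^{[k,\mathcal{R}_U]},W_{1:K},\mathcal{R}_S)\sim(Q_n^{[k',\mathcal{R}_U']},A_n^{[k',\mathcal{R}_U']},W_{1:K},\mathcal{R}_S)$; (C7) $I(W_{\bar k};\mathcal{F},A_{1:N}^{[k,\mathcal{R}_U]},\mathcal{R}_U)=0$; (C8) $I(\mathcal{R}_S\setminus\mathcal{R}_U;\mathcal{F},A_{1:N}^{[k,\mathcal{R}_U]},W_k,\mathcal{R}_U)=0$. *)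

theory Defs
  imports "HOL-Probability.Probability"
begin

abbreviation ent :: "real \<Rightarrow> 'w pmf \<Rightarrow> ('w \<Rightarrow> 'x) \<Rightarrow> real" where
  "ent b p X \<equiv> prob_space.entropy (measure_pmf p) b
      (count_space (X ` space (measure_pmf p))) X"

abbreviation cent :: "real \<Rightarrow> 'w pmf \<Rightarrow> ('w \<Rightarrow> 'x) \<Rightarrow> ('w \<Rightarrow> 'y) \<Rightarrow> real" where
  "cent b p X Y \<equiv> prob_space.conditional_entropy (measure_pmf p) b
      (count_space (X ` space (measure_pmf p))) (count_space (Y ` space (measure_pmf p))) X Y"

abbreviation minf :: "real \<Rightarrow> 'w pmf \<Rightarrow> ('w \<Rightarrow> 'x) \<Rightarrow> ('w \<Rightarrow> 'y) \<Rightarrow> real" where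
  "minf b p X Y \<equiv> prob_space.mutual_information (measure_pmf p) b
      (count_space (X ` space (measure_pmf p))) (count_space (Y ` space (measure_pmf p))) X Y"

definition Wall :: "nat \<Rightarrow> (nat \<Rightarrow> 'w \<Rightarrow> 'm) \<Rightarrow> 'w \<Rightarrow> (nat \<Rightarrow> 'm)" where
  "Wall K W = (\<lambda>\<omega>. restrict (\<lambda>j. W j \<omega>) {1..K})"

definition Wbar :: "nat \<Rightarrow> (nat \<Rightarrow> 'w \<Rightarrow> 'm) \<Rightarrow> nat \<Rightarrow> 'w \<Rightarrow> (nat \<Rightarrow> 'm)" where
  "Wbar K W k = (\<lambda>\<omega>. restrict (\<lambda>j. W j \<omega>) ({1..K} - {k}))"

text \<open>Sub-collection of the components of the server-side randomness indexed by a set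
  of component indices: R_S is comps C Rs, R_U is comps U Rs, R_S minus R_U is
  comps (C - U) Rs.\<close>
definition comps :: "'c set \<Rightarrow> ('c \<Rightarrow> 'w \<Rightarrow> 'r) \<Rightarrow> 'w \<Rightarrow> ('c \<Rightarrow> 'r)" where
  "comps U Rs = (\<lambda>\<omega>. restrict (\<lambda>c. Rs c \<omega>) U)"

text \<open>Q_{1:N} resp. A_{1:N} for desired index k and user randomness subset U.\<close>
definition allDB :: "nat \<Rightarrow> (nat \<Rightarrow> 'c set \<Rightarrow> nat \<Rightarrow> 'w \<Rightarrow> 'x) \<Rightarrow> nat \<Rightarrow> 'c set
    \<Rightarrow> 'w \<Rightarrow> (nat \<Rightarrow> 'x)" where
  "allDB N X k U = (\<lambda>\<omega>. restrict (\<lambda>n. X k U n \<omega>) {1..N})"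

definition admissible :: "'c set \<Rightarrow> nat \<Rightarrow> 'c set \<Rightarrow> bool" where
  "admissible C m U \<longleftrightarrow> U \<subseteq> C \<and> card U = m"

text \<open>The model: N databases, K messages of L i.i.d. uniform symbols over the finite
  field 'f (so the entropy base is q = CARD('f)), server randomness components Rs c
  for c in C, user strategy randomness F, queries Q k U n and answers A k U n.\<close>
definition spir_model :: "'w::finite pmf \<Rightarrow> nat \<Rightarrow> nat \<Rightarrow> nat \<Rightarrow> 'c set \<Rightarrow> nat
    \<Rightarrow> (nat \<Rightarrow> 'w \<Rightarrow> 'f::{finite,field} list) \<Rightarrow> bool" where
  "spir_model p N K L C m W \<longleftrightarrow>
     N \<ge> 1 \<and> K \<ge> 2 \<and> finite C \<and> m \<le> card C \<and>
     map_pmf (Wall K W) p = pmf_of_set (PiE {1..K} (\<lambda>_. {xs :: 'f list. length xs = L}))"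

definition valid_scheme :: "'w::finite pmf \<Rightarrow> nat \<Rightarrow> nat \<Rightarrow> nat \<Rightarrow> 'c set \<Rightarrow> nat
    \<Rightarrow> (nat \<Rightarrow> 'w \<Rightarrow> 'f::{finite,field} list) \<Rightarrow> ('c \<Rightarrow> 'w \<Rightarrow> 'r) \<Rightarrow> ('w \<Rightarrow> 'g)
    \<Rightarrow> (nat \<Rightarrow> 'c set \<Rightarrow> nat \<Rightarrow> 'w \<Rightarrow> 'q) \<Rightarrow> (nat \<Rightarrow> 'c set \<Rightarrow> nat \<Rightarrow> 'w \<Rightarrow> 'a) \<Rightarrow> bool" where
  "valid_scheme p N K L C m W Rs F Q A \<longleftrightarrow>
   (let b = real CARD('f) in
     spir_model p N K L C m W \<and>
     (\<forall>k\<in>{1..K}. \<forall>U. admissible C m U \<longrightarrow>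
        \<comment> \<open>(C1)\<close>
        minf b p (Wall K W) (\<lambda>\<omega>. (k, F \<omega>, comps C Rs \<omega>, comps U Rs \<omega>)) = 0 \<and>
        \<comment> \<open>(C2)\<close>
        minf b p (allDB N Q k U) (\<lambda>\<omega>. (Wall K W \<omega>, comps (C - U) Rs \<omega>)) = 0 \<and>
        \<comment> \<open>(C3)\<close>
        cent b p (allDB N Q k U) F = 0 \<and>
        \<comment> \<open>(C4)\<close>
        (\<forall>n\<in>{1..N}. cent b p (A k U n) (\<lambda>\<omega>. (Q k U n \<omega>, Wall K W \<omega>, comps C Rs \<omega>)) = 0) \<and>
        \<comment> \<open>(C5)\<close>
        cent b p (W k) (\<lambda>\<omega>. (F \<omega>, allDB N A k U \<omega>, comps U Rs \<omega>)) = 0 \<and>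
        \<comment> \<open>(C7)\<close>
        minf b p (Wbar K W k) (\<lambda>\<omega>. (F \<omega>, allDB N A k U \<omega>, comps U Rs \<omega>)) = 0 \<and>
        \<comment> \<open>(C8)\<close>
        minf b p (comps (C - U) Rs) (\<lambda>\<omega>. (F \<omega>, allDB N A k U \<omega>, W k \<omega>, comps U Rs \<omega>)) = 0) \<and>
     \<comment> \<open>(C6) user privacy\<close>
     (\<forall>k\<in>{1..K}. \<forall>k'\<in>{1..K}. \<forall>n\<in>{1..N}. \<forall>U. admissible C m U \<longrightarrow>
        (\<exists>U'. admissible C m U' \<and> ent b p (comps U' Rs) = ent b p (comps U Rs) \<and>
           map_pmf (\<lambda>\<omega>. (Q k U n \<omega>, A k U n \<omega>, Wall K W \<omega>, comps C Rs \<omega>)) p =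
           map_pmf (\<lambda>\<omega>. (Q k' U' n \<omega>, A k' U' n \<omega>, Wall K W \<omega>, comps C Rs \<omega>)) p)))"

end

theory Submission
  imports Defs
begin


definition PP :: "'w::finite pmf \<Rightarrow> ('w \<Rightarrow> 'x) \<Rightarrow> 'x \<Rightarrow> real" where
  "PP p V v = measure (measure_pmf p) (V -` {v} \<inter> space (measure_pmf p))"

definition HH :: "real \<Rightarrow> 'w::finite pmf \<Rightarrow> ('w \<Rightarrow> 'x) \<Rightarrow> real" where
  "HH b p V = - (\<Sum>\<omega>\<in>UNIV. pmf p \<omega> * log b (PP p V (V \<omega>)))"

lemma sf_pmf: "simple_function (measure_pmf (p::'w::finite pmf)) V"
  by (simp add: simple_function_def)

lemma regroup:
  fixes p :: "'w::finite pmf"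
  shows "(\<Sum>v\<in>V`space (measure_pmf p). PP p V v * f v) = (\<Sum>\<omega>\<in>UNIV. pmf p \<omega> * f (V \<omega>))"
proof -
  have "(\<Sum>\<omega>\<in>UNIV. pmf p \<omega> * f (V \<omega>)) =
     (\<Sum>v\<in>V`UNIV. \<Sum>\<omega>\<in>{x. x \<in> UNIV \<and> V x = v}. pmf p \<omega> * f (V \<omega>))"
    by (rule sum.image_gen) simp
  also have "\<dots> = (\<Sum>v\<in>V`UNIV. \<Sum>\<omega>\<in>{x. V x = v}. pmf p \<omega> * f v)"
    by (intro sum.cong) auto
  also have "\<dots> = (\<Sum>v\<in>V`UNIV. PP p V v * f v)"
    by (intro sum.cong refl) (simp add: PP_def measure_measure_pmf_finite sum_distrib_right vimage_def)
  finally show ?thesis by simp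
qed

lemma PP_pos: "pmf p \<omega> > 0 \<Longrightarrow> PP p V (V \<omega>) > 0"
proof -
  assume a: "pmf p \<omega> > 0"
  have "pmf p \<omega> \<le> PP p V (V \<omega>)"
    unfolding PP_def pmf.rep_eq by (intro measure_pmf.finite_measure_mono) auto
  with a show ?thesis by simp
qed

lemma log_split: "pmf p \<omega> * log b (PP p X x / PP p Y y) = pmf p \<omega> * log b (PP p X x) - pmf p \<omega> * log b (PP p Y y)"
  if "pmf p \<omega> > 0 \<Longrightarrow> PP p X x > 0 \<and> PP p Y y > 0"
proof (cases "pmf p \<omega> > 0")
  case True then show ?thesis using that by (simp add: log_divide right_diff_distrib)
next
  case False then have "pmf p \<omega> = 0" using pmf_nonneg[of p \<omega>] by linarith
  then show ?thesis by simp
qed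



locale pinf =
  fixes b :: real and p :: "'w::finite pmf"
  assumes b: "1 < b"
begin

sublocale information_space "measure_pmf p" b
  by unfold_locales (rule b)

lemma sd: "simple_distributed (measure_pmf p) V (PP p V)"
  unfolding PP_def by (rule measure_pmf.simple_distributedI[OF sf_pmf measure_nonneg refl])

lemma ent_eq: "ent b p V = HH b p V"
proof -
  have "ent b p V = - (\<Sum>x\<in>V`space (measure_pmf p). PP p V x * log b (PP p V x))"
    by (rule entropy_simple_distributed[OF sd])
  also have "\<dots> = HH b p V" unfolding HH_def by (subst regroup) simp
  finally show ?thesis .
qed

lemma cent_eq: "cent b p X Y = HH b p (\<lambda>\<omega>. (X \<omega>, Y \<omega>)) - HH b p Y"
proof -
  have "cent b p X Y = - (\<Sum>(x, y)\<in>(\<lambda>\<omega>. (X \<omega>, Y \<omega>)) ` space (measure_pmf p).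
      PP p (\<lambda>\<omega>. (X \<omega>, Y \<omega>)) (x, y) * log b (PP p (\<lambda>\<omega>. (X \<omega>, Y \<omega>)) (x, y) / PP p Y y))"
    by (rule conditional_entropy_eq[OF sd sd])
  also have "\<dots> = - (\<Sum>v\<in>(\<lambda>\<omega>. (X \<omega>, Y \<omega>)) ` space (measure_pmf p).
      PP p (\<lambda>\<omega>. (X \<omega>, Y \<omega>)) v * log b (PP p (\<lambda>\<omega>. (X \<omega>, Y \<omega>)) v / PP p Y (snd v)))"
    by (simp add: split_beta')
  also have "\<dots> = - (\<Sum>\<omega>\<in>UNIV. pmf p \<omega> * log b (PP p (\<lambda>\<omega>. (X \<omega>, Y \<omega>)) (X \<omega>, Y \<omega>) / PP p Y (Y \<omega>)))"
    by (subst regroup) simp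
  also have "\<dots> = - (\<Sum>\<omega>\<in>UNIV. pmf p \<omega> * log b (PP p (\<lambda>\<omega>. (X \<omega>, Y \<omega>)) (X \<omega>, Y \<omega>)) - pmf p \<omega> * log b (PP p Y (Y \<omega>)))"
    by (intro arg_cong[where f=uminus] sum.cong refl log_split)
       (auto intro: PP_pos[where V="\<lambda>\<omega>. (X \<omega>, Y \<omega>)", simplified] PP_pos[where V=Y])
  also have "\<dots> = HH b p (\<lambda>\<omega>. (X \<omega>, Y \<omega>)) - HH b p Y"
    unfolding HH_def by (simp add: sum_subtractf)
  finally show ?thesis .
qed

lemma minf_eq: "minf b p X Y = HH b p X + HH b p Y - HH b p (\<lambda>\<omega>. (X \<omega>, Y \<omega>))"
  using mutual_information_eq_entropy_conditional_entropy[OF sf_pmf sf_pmf, of X Y]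
    ent_eq[of X] cent_eq[of X Y] by simp

end


lemma log_split4: "w * log b (a / (c * (d / e))) = w * log b a - w * log b c - w * log b d + w * log b e"
  if "w > 0 \<Longrightarrow> a > 0 \<and> c > 0 \<and> d > 0 \<and> e > 0" "w \<ge> 0"
proof (cases "w > 0")
  case True then show ?thesis using that
    by (simp add: log_divide log_mult algebra_simps)
next
  case False then have "w = 0" using that by linarith
  then show ?thesis by simp
qed

context pinf begin

lemma submod: "HH b p (\<lambda>\<omega>. (X \<omega>, Y \<omega>, Z \<omega>)) + HH b p Z \<le> HH b p (\<lambda>\<omega>. (X \<omega>, Z \<omega>)) + HH b p (\<lambda>\<omega>. (Y \<omega>, Z \<omega>))"
proof -
  let ?V = "\<lambda>\<omega>. (X \<omega>, Y \<omega>, Z \<omega>)"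
  let ?f = "\<lambda>v. log b (PP p ?V v / (PP p (\<lambda>\<omega>. (X \<omega>, Z \<omega>)) (fst v, snd (snd v)) *
      (PP p (\<lambda>\<omega>. (Y \<omega>, Z \<omega>)) (snd v) / PP p Z (snd (snd v)))))"
  have "0 \<le> conditional_mutual_information b (count_space (X`space (measure_pmf p))) (count_space (Y`space (measure_pmf p))) (count_space (Z`space (measure_pmf p))) X Y Z" by (rule conditional_mutual_information_nonneg[OF sf_pmf sf_pmf sf_pmf])
  also have "conditional_mutual_information b (count_space (X`space (measure_pmf p))) (count_space (Y`space (measure_pmf p))) (count_space (Z`space (measure_pmf p))) X Y Z = (\<Sum>v\<in>?V ` space (measure_pmf p). PP p ?V v * ?f v)"
    by (subst conditional_mutual_information_eq[OF sd sd sd sd]) (simp add: split_beta')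
  also have "\<dots> = (\<Sum>\<omega>\<in>UNIV. pmf p \<omega> * ?f (?V \<omega>))"
    by (rule regroup)
  also have "\<dots> = (\<Sum>\<omega>\<in>UNIV. pmf p \<omega> * log b (PP p ?V (?V \<omega>)) - pmf p \<omega> * log b (PP p (\<lambda>\<omega>. (X \<omega>, Z \<omega>)) (X \<omega>, Z \<omega>))
      - pmf p \<omega> * log b (PP p (\<lambda>\<omega>. (Y \<omega>, Z \<omega>)) (Y \<omega>, Z \<omega>)) + pmf p \<omega> * log b (PP p Z (Z \<omega>)))"
    apply (rule sum.cong[OF refl])
    apply (simp only: fst_conv snd_conv)
    by (rule log_split4)
       (auto intro: PP_pos[where V="?V", simplified] PP_pos[where V="\<lambda>\<omega>. (X \<omega>, Z \<omega>)", simplified]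
          PP_pos[where V="\<lambda>\<omega>. (Y \<omega>, Z \<omega>)", simplified] PP_pos[where V=Z])
  also have "\<dots> = - HH b p ?V + HH b p (\<lambda>\<omega>. (X \<omega>, Z \<omega>)) + HH b p (\<lambda>\<omega>. (Y \<omega>, Z \<omega>)) - HH b p Z"
    unfolding HH_def by (simp add: sum.distrib sum_subtractf)
  finally show ?thesis by simp
qed

lemma HH_cong:
  assumes "\<And>\<omega> \<omega>'. V1 \<omega> = V1 \<omega>' \<longleftrightarrow> V2 \<omega> = V2 \<omega>'"
  shows "HH b p V1 = HH b p V2"
proof -
  have "PP p V1 (V1 \<omega>) = PP p V2 (V2 \<omega>)" for \<omega>
    unfolding PP_def using assms by (intro arg_cong[where f="measure (measure_pmf p)"]) auto
  then show ?thesis unfolding HH_def by simp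
qed

lemma cent_nonneg: "HH b p Y \<le> HH b p (\<lambda>\<omega>. (X \<omega>, Y \<omega>))"
  using conditional_entropy_nonneg[OF sf_pmf sf_pmf, of X Y] cent_eq[of X Y] by simp

lemma HH_mono:
  assumes "\<And>\<omega> \<omega>'. V2 \<omega> = V2 \<omega>' \<Longrightarrow> V1 \<omega> = V1 \<omega>'"
  shows "HH b p V1 \<le> HH b p V2"
proof -
  have "HH b p V2 = HH b p (\<lambda>\<omega>. (V2 \<omega>, V1 \<omega>))"
  proof (rule HH_cong)
    fix \<omega> \<omega>' show "V2 \<omega> = V2 \<omega>' \<longleftrightarrow> (V2 \<omega>, V1 \<omega>) = (V2 \<omega>', V1 \<omega>')"
      using assms[of \<omega> \<omega>'] by auto
  qed
  then show ?thesis using cent_nonneg[of V1 V2] by simp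
qed

lemma subadd: "HH b p (\<lambda>\<omega>. (X \<omega>, Y \<omega>)) \<le> HH b p X + HH b p Y"
proof -
  have "HH b p (\<lambda>\<omega>. (X \<omega>, Y \<omega>, ())) + HH b p (\<lambda>\<omega>. ()) \<le> HH b p (\<lambda>\<omega>. (X \<omega>, ())) + HH b p (\<lambda>\<omega>. (Y \<omega>, ()))"
    by (rule submod)
  moreover have "HH b p (\<lambda>\<omega>. ()) = 0"
  proof -
    have "(\<lambda>\<omega>::'w. ()) -` {()} \<inter> space (measure_pmf p) = space (measure_pmf p)" by auto
    then have "PP p (\<lambda>\<omega>. ()) () = 1" unfolding PP_def by simp
    then show ?thesis unfolding HH_def by simp
  qed
  moreover have "HH b p (\<lambda>\<omega>. (X \<omega>, Y \<omega>, ())) = HH b p (\<lambda>\<omega>. (X \<omega>, Y \<omega>))" by (rule HH_cong) auto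
  moreover have "HH b p (\<lambda>\<omega>. (X \<omega>, ())) = HH b p X" by (rule HH_cong) auto
  moreover have "HH b p (\<lambda>\<omega>. (Y \<omega>, ())) = HH b p Y" by (rule HH_cong) auto
  ultimately show ?thesis by simp
qed

lemma dp1:
  assumes "\<And>\<omega> \<omega>'. X2 \<omega> = X2 \<omega>' \<Longrightarrow> X1 \<omega> = X1 \<omega>'"
  shows "HH b p X1 + HH b p Y - HH b p (\<lambda>\<omega>. (X1 \<omega>, Y \<omega>)) \<le> HH b p X2 + HH b p Y - HH b p (\<lambda>\<omega>. (X2 \<omega>, Y \<omega>))"
proof -
  have s: "HH b p (\<lambda>\<omega>. (X2 \<omega>, Y \<omega>, X1 \<omega>)) + HH b p X1 \<le> HH b p (\<lambda>\<omega>. (X2 \<omega>, X1 \<omega>)) + HH b p (\<lambda>\<omega>. (Y \<omega>, X1 \<omega>))"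
    by (rule submod)
  have "HH b p (\<lambda>\<omega>. (X2 \<omega>, Y \<omega>, X1 \<omega>)) = HH b p (\<lambda>\<omega>. (X2 \<omega>, Y \<omega>))" apply (rule HH_cong) subgoal for \<omega> \<omega>' using assms[of \<omega> \<omega>'] by auto done
  moreover have "HH b p (\<lambda>\<omega>. (X2 \<omega>, X1 \<omega>)) = HH b p X2" apply (rule HH_cong) subgoal for \<omega> \<omega>' using assms[of \<omega> \<omega>'] by auto done
  moreover have "HH b p (\<lambda>\<omega>. (Y \<omega>, X1 \<omega>)) = HH b p (\<lambda>\<omega>. (X1 \<omega>, Y \<omega>))" by (rule HH_cong) auto
  ultimately show ?thesis using s by linarith
qed

lemma dp:
  assumes "\<And>\<omega> \<omega>'. X2 \<omega> = X2 \<omega>' \<Longrightarrow> X1 \<omega> = X1 \<omega>'"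
    and "\<And>\<omega> \<omega>'. Y2 \<omega> = Y2 \<omega>' \<Longrightarrow> Y1 \<omega> = Y1 \<omega>'"
  shows "HH b p X1 + HH b p Y1 - HH b p (\<lambda>\<omega>. (X1 \<omega>, Y1 \<omega>)) \<le> HH b p X2 + HH b p Y2 - HH b p (\<lambda>\<omega>. (X2 \<omega>, Y2 \<omega>))"
proof -
  have a: "HH b p X1 + HH b p Y1 - HH b p (\<lambda>\<omega>. (X1 \<omega>, Y1 \<omega>)) \<le> HH b p X2 + HH b p Y1 - HH b p (\<lambda>\<omega>. (X2 \<omega>, Y1 \<omega>))"
    apply (rule dp1) subgoal for \<omega> \<omega>' using assms[of \<omega> \<omega>'] by auto done
  have c: "HH b p Y1 + HH b p X2 - HH b p (\<lambda>\<omega>. (Y1 \<omega>, X2 \<omega>)) \<le> HH b p Y2 + HH b p X2 - HH b p (\<lambda>\<omega>. (Y2 \<omega>, X2 \<omega>))"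
    apply (rule dp1) subgoal for \<omega> \<omega>' using assms[of \<omega> \<omega>'] by auto done
  have "HH b p (\<lambda>\<omega>. (Y1 \<omega>, X2 \<omega>)) = HH b p (\<lambda>\<omega>. (X2 \<omega>, Y1 \<omega>))" by (rule HH_cong) auto
  moreover have "HH b p (\<lambda>\<omega>. (Y2 \<omega>, X2 \<omega>)) = HH b p (\<lambda>\<omega>. (X2 \<omega>, Y2 \<omega>))" by (rule HH_cong) auto
  ultimately show ?thesis using a c by linarith
qed

end


lemma card_field_gt1: "1 < real CARD('f::{finite,field})"
proof -
  have "{0::'f, 1} \<subseteq> UNIV" by simp
  then have "card {0::'f, 1} \<le> CARD('f)" by (rule card_mono[OF finite])
  then show ?thesis by simp
qed

theorem lemma8:
  fixes p :: "'w::finite pmf"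
    and W :: "nat \<Rightarrow> 'w \<Rightarrow> 'f::{finite,field} list"
    and Rs :: "'c \<Rightarrow> 'w \<Rightarrow> 'r" and F :: "'w \<Rightarrow> 'g"
    and Q :: "nat \<Rightarrow> 'c set \<Rightarrow> nat \<Rightarrow> 'w \<Rightarrow> 'q"
    and A :: "nat \<Rightarrow> 'c set \<Rightarrow> nat \<Rightarrow> 'w \<Rightarrow> 'a"
  assumes valid: "valid_scheme p N K L C m W Rs F Q A"
    and n: "n \<in> {1..N}" and k: "k \<in> {1..K}" and k': "k' \<in> {1..K}" and kk': "k \<noteq> k'"
    and U: "admissible C m U"
    and U': "admissible C m U'"
    and HU': "ent (real CARD('f)) p (comps U' Rs) = ent (real CARD('f)) p (comps U Rs)"
    and priv: "map_pmf (\<lambda>\<omega>. (Q k U n \<omega>, A k U n \<omega>, Wall K W \<omega>, comps C Rs \<omega>)) p =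
               map_pmf (\<lambda>\<omega>. (Q k' U' n \<omega>, A k' U' n \<omega>, Wall K W \<omega>, comps C Rs \<omega>)) p"
  shows "cent (real CARD('f)) p (A k' U' n) (\<lambda>\<omega>. (Q k' U' n \<omega>, comps U' Rs \<omega>)) =
         cent (real CARD('f)) p (A k' U' n) (\<lambda>\<omega>. (Q k' U' n \<omega>, W k \<omega>, comps U' Rs \<omega>))"
proof -
  let ?b = "real CARD('f)"
  interpret pinf ?b p by unfold_locales (rule card_field_gt1)
  let ?QQ = "allDB N Q k' U'" and ?AA = "allDB N A k' U'" and ?Uu = "comps U' Rs"
  let ?Qn = "Q k' U' n" and ?An = "A k' U' n" and ?Wk = "W k" and ?Wb = "Wbar K W k'"
  let ?Z = "\<lambda>\<omega>. (F \<omega>, ?AA \<omega>, ?Uu \<omega>)"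
  let ?T = "\<lambda>\<omega>. (?QQ \<omega>, ?Z \<omega>)"
  let ?Y = "\<lambda>\<omega>. (?Qn \<omega>, ?An \<omega>, ?Uu \<omega>)"
  let ?H = "HH ?b p"
  have C: "cent ?b p ?QQ F = 0 \<and> minf ?b p ?Wb ?Z = 0"
    using valid k' U' unfolding valid_scheme_def Let_def by blast
  have h3: "?H (\<lambda>\<omega>. (?QQ \<omega>, F \<omega>)) = ?H F" using C cent_eq[of ?QQ F] by simp
  have h7: "?H ?Wb + ?H ?Z = ?H (\<lambda>\<omega>. (?Wb \<omega>, ?Z \<omega>))" using C minf_eq[of ?Wb ?Z] by simp
  have s1: "?H (\<lambda>\<omega>. (?QQ \<omega>, (\<lambda>\<omega>. (?AA \<omega>, ?Uu \<omega>)) \<omega>, F \<omega>)) + ?H F \<le>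
      ?H (\<lambda>\<omega>. (?QQ \<omega>, F \<omega>)) + ?H (\<lambda>\<omega>. ((\<lambda>\<omega>. (?AA \<omega>, ?Uu \<omega>)) \<omega>, F \<omega>))"
    by (rule submod)
  have e1: "?H (\<lambda>\<omega>. (?QQ \<omega>, (\<lambda>\<omega>. (?AA \<omega>, ?Uu \<omega>)) \<omega>, F \<omega>)) = ?H ?T" by (rule HH_cong) auto
  have e2: "?H (\<lambda>\<omega>. ((\<lambda>\<omega>. (?AA \<omega>, ?Uu \<omega>)) \<omega>, F \<omega>)) = ?H ?Z" by (rule HH_cong) auto
  have e3: "?H ?Z \<le> ?H ?T" by (rule cent_nonneg)
  have hT: "?H ?T = ?H ?Z" using s1 e1 e2 e3 h3 by linarith
  have m2: "?H (\<lambda>\<omega>. (?Wb \<omega>, ?Z \<omega>)) \<le> ?H (\<lambda>\<omega>. (?Wb \<omega>, ?T \<omega>))"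
    by (rule HH_mono) auto
  have detW: "?Wk \<omega> = ?Wk \<omega>'" if "?Wb \<omega> = ?Wb \<omega>'" for \<omega> \<omega>'
  proof -
    from that have "Wbar K W k' \<omega> k = Wbar K W k' \<omega>' k" by simp
    with k kk' show ?thesis by (simp add: Wbar_def)
  qed
  have detY: "?Y \<omega> = ?Y \<omega>'" if "?T \<omega> = ?T \<omega>'" for \<omega> \<omega>'
  proof -
    from that have "?QQ \<omega> n = ?QQ \<omega>' n" "?AA \<omega> n = ?AA \<omega>' n" "?Uu \<omega> = ?Uu \<omega>'" by simp_all
    with n show ?thesis by (simp add: allDB_def)
  qed
  have d3: "?H ?Wk + ?H ?Y - ?H (\<lambda>\<omega>. (?Wk \<omega>, ?Y \<omega>)) \<le> ?H ?Wb + ?H ?T - ?H (\<lambda>\<omega>. (?Wb \<omega>, ?T \<omega>))"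
    by (rule dp) (erule detW, erule detY)
  have a: "?H (\<lambda>\<omega>. (?Wk \<omega>, ?Y \<omega>)) = ?H ?Wk + ?H ?Y"
    using d3 hT h7 m2 subadd[of ?Wk ?Y] by linarith
  let ?QU = "\<lambda>\<omega>. (?Qn \<omega>, ?Uu \<omega>)"
  have sub: "?H (\<lambda>\<omega>. (?Wk \<omega>, ?QU \<omega>)) \<le> ?H ?Wk + ?H ?QU" by (rule subadd)
  have sm: "?H (\<lambda>\<omega>. (?An \<omega>, ?Wk \<omega>, ?QU \<omega>)) + ?H ?QU \<le> ?H (\<lambda>\<omega>. (?An \<omega>, ?QU \<omega>)) + ?H (\<lambda>\<omega>. (?Wk \<omega>, ?QU \<omega>))"
    by (rule submod)
  have c1: "?H (\<lambda>\<omega>. (?An \<omega>, ?Wk \<omega>, ?QU \<omega>)) = ?H (\<lambda>\<omega>. (?Wk \<omega>, ?Y \<omega>))" by (rule HH_cong) auto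
  have c2: "?H (\<lambda>\<omega>. (?An \<omega>, ?QU \<omega>)) = ?H ?Y" by (rule HH_cong) auto
  have c3: "?H (\<lambda>\<omega>. (?An \<omega>, (\<lambda>\<omega>. (?Qn \<omega>, ?Wk \<omega>, ?Uu \<omega>)) \<omega>)) = ?H (\<lambda>\<omega>. (?Wk \<omega>, ?Y \<omega>))" by (rule HH_cong) auto
  have c4: "?H (\<lambda>\<omega>. (?Qn \<omega>, ?Wk \<omega>, ?Uu \<omega>)) = ?H (\<lambda>\<omega>. (?Wk \<omega>, ?QU \<omega>))" by (rule HH_cong) auto
  show ?thesis
    unfolding cent_eq using a sub sm c1 c2 c3 c4 by linarith
qed

end
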